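(* Let $F,W,r,\sigma_0^2,\eta,P_c,P_{\max}>0$ and $\alpha>0$. Consider the problem \[ \min_{P_t}\ \frac{F}{W\log_2\!\left(1+\frac{P_t r^{-\alpha}}{\sigma_0^2}\right)}\left(\frac{1}{\eta}P_t+P_c\right)\quad\text{s.t.}\quad 0<P_t\le P_{\max}. \] Denote $y=1+P_t\frac{r^{-\alpha}}{\sigma_0^2}$, $y_0=1+P_{\max}\frac{r^{-\alpha}}{\sigma_0^2}$, and $\varepsilon=\frac{r^{-\alpha}\eta P_c}{\sigma_0^2}-1$. If $\left(\frac{y_0}{e}\right)^{y_0}<2^{\varepsilon/\ln 2}$, then the optimal solution is $P_t^*=P_{\max}$. Otherwise, the optimal solution $P_t^*$ satisfies $\left(\frac{y}{e}\right)^{y}=2^{\varepsilon/\ln 2}$ with $y=1+P_t^*\frac{r^{-\alpha}}{\sigma_0^2}$.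
   Context: Interpretation: the objective is the (approximate) energy consumed by a D2D transmitter to send a file of $F$ bits over a link of distance $r$ with bandwidth $W$, path-loss exponent $\alpha$, noise-plus-interference variance $\sigma_0^2$, power amplifier efficiency $\eta$, circuit power $P_c$, and transmit power $P_t$ bounded by $P_{\max}$. *)

theory Defs
  imports Complex_Main
begin

definition d2d_energy :: "real \<Rightarrow> real \<Rightarrow> real \<Rightarrow> real \<Rightarrow> real \<Rightarrow> real \<Rightarrow> real \<Rightarrow> real \<Rightarrow> real" where
  "d2d_energy F W r \<alpha> \<sigma>0sq \<eta> Pc Pt =
     F / (W * log 2 (1 + Pt * r powr (-\<alpha>) / \<sigma>0sq)) * (Pt / \<eta> + Pc)"

definition d2d_optimal :: "real \<Rightarrow> real \<Rightarrow> real \<Rightarrow> real \<Rightarrow> real \<Rightarrow> real \<Rightarrow> real \<Rightarrow> real \<Rightarrow> real \<Rightarrow> bool" where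
  "d2d_optimal F W r \<alpha> \<sigma>0sq \<eta> Pc Pmax Pt \<longleftrightarrow>
     0 < Pt \<and> Pt \<le> Pmax \<and>
     (\<forall>Q. 0 < Q \<and> Q \<le> Pmax \<longrightarrow>
        d2d_energy F W r \<alpha> \<sigma>0sq \<eta> Pc Pt \<le> d2d_energy F W r \<alpha> \<sigma>0sq \<eta> Pc Q)"

end

theory Submission imports Defs begin

lemma phi_deriv: "x > 0 \<Longrightarrow> ((\<lambda>x. x*(ln x - 1)) has_real_derivative ln x) (at x)"
  by (auto intro!: derivative_eq_intros)

lemma phi_mono: fixes a b :: real assumes "1 \<le> a" "a < b" shows "a*(ln a - 1) < b*(ln b - 1)"
proof (rule DERIV_pos_imp_increasing_open[OF assms(2)])
  fix x assume "a < x" "x < b"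
  then show "\<exists>y. ((\<lambda>x. x*(ln x - 1)) has_real_derivative y) (at x) \<and> y > 0"
    using assms phi_deriv[of x] by (intro exI[of _ "ln x"]) auto
next
  show "continuous_on {a..b} (\<lambda>x. x*(ln x - 1))" using assms
    by (intro continuous_intros) auto
qed

lemma g_deriv: "x > 1 \<Longrightarrow> ((\<lambda>x. (x+e)/ln x) has_real_derivative (ln x - (x+e)/x)/(ln x)^2) (at x)"
  by (auto intro!: derivative_eq_intros simp: power2_eq_square field_simps)

lemma g_eq: fixes x e :: real assumes "x > 1"
  shows "(ln x - (x+e)/x)/(ln x)^2 = (x*(ln x - 1) - e) / (x * (ln x)^2)"
  using assms by (simp add: field_simps power2_eq_square)

lemma g_dec: fixes a b e :: real assumes "1 < a" "a < b" "\<And>x. a < x \<Longrightarrow> x < b \<Longrightarrow> x*(ln x - 1) < e"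
  shows "(a+e)/ln a > (b+e)/ln b"
proof (rule DERIV_neg_imp_decreasing_open[OF assms(2), of "\<lambda>x. (x+e)/ln x"])
  fix x assume x: "a < x" "x < b"
  have "ln x > 0" using x assms(1) by (simp add: ln_gt_zero)
  have "(x*(ln x - 1) - e) / (x * (ln x)^2) < 0" using assms(3)[OF x] x assms(1) \<open>ln x > 0\<close>
    by (intro divide_neg_pos) auto
  then show "\<exists>y. ((\<lambda>x. (x+e)/ln x) has_real_derivative y) (at x) \<and> y < 0"
    using g_deriv[of x e] g_eq[of x e] x assms(1) by (intro exI[of _ "(ln x - (x+e)/x)/(ln x)^2"]) auto
next
  show "continuous_on {a..b} (\<lambda>x. (x+e)/ln x)" using assms(1,2)
    by (intro continuous_intros) auto
qed

lemma g_inc: fixes a b e :: real assumes "1 < a" "a < b" "\<And>x. a < x \<Longrightarrow> x < b \<Longrightarrow> x*(ln x - 1) > e"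
  shows "(a+e)/ln a < (b+e)/ln b"
proof (rule DERIV_pos_imp_increasing_open[OF assms(2), of "\<lambda>x. (x+e)/ln x"])
  fix x assume x: "a < x" "x < b"
  have "ln x > 0" using x assms(1) by (simp add: ln_gt_zero)
  have "(x*(ln x - 1) - e) / (x * (ln x)^2) > 0" using assms(3)[OF x] x assms(1) \<open>ln x > 0\<close>
    by (intro divide_pos_pos) auto
  then show "\<exists>y. ((\<lambda>x. (x+e)/ln x) has_real_derivative y) (at x) \<and> y > 0"
    using g_deriv[of x e] g_eq[of x e] x assms(1) by (intro exI[of _ "(ln x - (x+e)/x)/(ln x)^2"]) auto
next
  show "continuous_on {a..b} (\<lambda>x. (x+e)/ln x)" using assms(1,2)
    by (intro continuous_intros) auto
qed


lemma g_cmp: fixes a b e :: real assumes "1 < a" "a < b" "b*(ln b - 1) \<le> e"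
  shows "(a+e)/ln a > (b+e)/ln b"
proof (rule g_dec[OF assms(1,2)])
  fix x assume "a < x" "x < b"
  then have "x*(ln x - 1) < b*(ln b - 1)" using phi_mono[of x b] assms(1) by simp
  then show "x*(ln x - 1) < e" using assms(3) by simp
qed

lemma g_cmp2: fixes a b e :: real assumes "1 < a" "a < b" "a*(ln a - 1) \<ge> e"
  shows "(a+e)/ln a < (b+e)/ln b"
proof (rule g_inc[OF assms(1,2)])
  fix x assume "a < x" "x < b"
  then have "x*(ln x - 1) > a*(ln a - 1)" using phi_mono[of a x] assms(1) by simp
  then show "x*(ln x - 1) > e" using assms(3) by simp
qed

lemma energy_eq:
  fixes F W r \<alpha> \<sigma>0sq \<eta> Pc Q :: real
  assumes "W > 0" "r > 0" "\<sigma>0sq > 0" "\<eta> > 0"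
  shows "d2d_energy F W r \<alpha> \<sigma>0sq \<eta> Pc Q =
     (F * ln 2 / (W * (r powr (-\<alpha>) / \<sigma>0sq) * \<eta>)) *
     (((1 + Q * r powr (-\<alpha>) / \<sigma>0sq) + (r powr (-\<alpha>) * \<eta> * Pc / \<sigma>0sq - 1)) / ln (1 + Q * r powr (-\<alpha>) / \<sigma>0sq))"
proof (cases "ln (1 + Q * r powr (-\<alpha>) / \<sigma>0sq) = 0")
  case True then show ?thesis by (simp add: d2d_energy_def log_def)
next
  case False
  have "r powr (-\<alpha>) > 0" using assms by simp
  then show ?thesis using False assms by (simp add: d2d_energy_def log_def field_simps)
qed

lemma cond_eq: fixes y e :: real assumes "y > 0"
  shows "(y / exp 1) powr y = exp (y*(ln y - 1))" "2 powr (e / ln 2) = exp e"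
  using assms by (simp_all add: powr_def ln_div algebra_simps)

theorem proposition2:
  fixes F W r \<alpha> \<sigma>0sq \<eta> Pc Pmax :: real
  assumes "F > 0" "W > 0" "r > 0" "\<sigma>0sq > 0" "\<eta> > 0" "Pc > 0" "Pmax > 0" "\<alpha> > 0"
  defines "y0 \<equiv> 1 + Pmax * r powr (-\<alpha>) / \<sigma>0sq"
      and "\<epsilon> \<equiv> r powr (-\<alpha>) * \<eta> * Pc / \<sigma>0sq - 1"
  shows "((y0 / exp 1) powr y0 < 2 powr (\<epsilon> / ln 2) \<longrightarrow>
            (\<forall>Pt. d2d_optimal F W r \<alpha> \<sigma>0sq \<eta> Pc Pmax Pt \<longleftrightarrow> Pt = Pmax))
       \<and> (\<not> (y0 / exp 1) powr y0 < 2 powr (\<epsilon> / ln 2) \<longrightarrow>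
            (\<exists>Pt. d2d_optimal F W r \<alpha> \<sigma>0sq \<eta> Pc Pmax Pt) \<and>
            (\<forall>Pt. d2d_optimal F W r \<alpha> \<sigma>0sq \<eta> Pc Pmax Pt \<longrightarrow>
               (let y = 1 + Pt * r powr (-\<alpha>) / \<sigma>0sq
                in (y / exp 1) powr y = 2 powr (\<epsilon> / ln 2))))"
  proof -
  define c where "c = r powr (-\<alpha>)"
  have c: "c > 0" using assms(3) by (simp add: c_def)
  define C where "C = F * ln 2 / (W * (c / \<sigma>0sq) * \<eta>)"
  have C: "C > 0" using assms c by (simp add: C_def)
  define g where "g = (\<lambda>y::real. (y + \<epsilon>)/ln y)"
  define Y where "Y = (\<lambda>Q::real. 1 + Q * c / \<sigma>0sq)"
  have E: "d2d_energy F W r \<alpha> \<sigma>0sq \<eta> Pc Q = C * g (Y Q)" for Q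
    using energy_eq[OF assms(2,3,4,5), of F \<alpha> Pc Q]
    unfolding C_def g_def Y_def c_def \<epsilon>_def by simp
  have Ymono: "Y a < Y b \<longleftrightarrow> a < b" for a b using c assms(4) by (simp add: Y_def field_simps)
  have Yinj: "Y a = Y b \<longleftrightarrow> a = b" for a b using c assms(4) by (auto simp: Y_def field_simps)
  have Ypos: "Q > 0 \<Longrightarrow> Y Q > 1" for Q using c assms(4) by (simp add: Y_def)
  have Y0: "Y Pmax = y0" by (simp add: Y_def y0_def c_def)
  have y0: "y0 > 1" using Ypos[OF assms(7)] Y0 by simp
  have eps: "\<epsilon> > -1" using c assms by (simp add: \<epsilon>_def c_def[symmetric])
  have cond: "(y0 / exp 1) powr y0 < 2 powr (\<epsilon> / ln 2) \<longleftrightarrow> y0*(ln y0 - 1) < \<epsilon>"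
    using cond_eq(1)[of y0] cond_eq(2)[of y0 \<epsilon>] y0 by simp
  have A: "(\<forall>Pt. d2d_optimal F W r \<alpha> \<sigma>0sq \<eta> Pc Pmax Pt \<longleftrightarrow> Pt = Pmax)" if h: "y0*(ln y0 - 1) < \<epsilon>"
  proof -
    have lt: "d2d_energy F W r \<alpha> \<sigma>0sq \<eta> Pc Pmax < d2d_energy F W r \<alpha> \<sigma>0sq \<eta> Pc Q"
      if "0 < Q" "Q < Pmax" for Q
    proof -
      have "g (Y Q) > g (Y Pmax)" unfolding g_def
        using g_cmp[of "Y Q" "Y Pmax" \<epsilon>] Ypos[OF that(1)] Ymono[of Q Pmax] that h Y0 by simp
      then show ?thesis using C by (simp add: E)
    qed
    show ?thesis
    proof (intro allI iffI)
      fix Pt assume o: "d2d_optimal F W r \<alpha> \<sigma>0sq \<eta> Pc Pmax Pt"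
      show "Pt = Pmax"
      proof (rule ccontr)
        assume "Pt \<noteq> Pmax"
        then have "Pt < Pmax" using o by (simp add: d2d_optimal_def)
        have "d2d_energy F W r \<alpha> \<sigma>0sq \<eta> Pc Pt \<le> d2d_energy F W r \<alpha> \<sigma>0sq \<eta> Pc Pmax"
          using o assms(7) unfolding d2d_optimal_def by blast
        moreover have "0 < Pt" using o by (simp add: d2d_optimal_def)
        ultimately show False using lt[of Pt] \<open>Pt < Pmax\<close> by linarith
      qed
    next
      fix Pt assume "Pt = Pmax"
      then show "d2d_optimal F W r \<alpha> \<sigma>0sq \<eta> Pc Pmax Pt"
        unfolding d2d_optimal_def using assms(7) lt by force
    qed
  qed
  have B: "(\<exists>Pt. d2d_optimal F W r \<alpha> \<sigma>0sq \<eta> Pc Pmax Pt) \<and>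
            (\<forall>Pt. d2d_optimal F W r \<alpha> \<sigma>0sq \<eta> Pc Pmax Pt \<longrightarrow>
               (let y = 1 + Pt * r powr (-\<alpha>) / \<sigma>0sq
                in (y / exp 1) powr y = 2 powr (\<epsilon> / ln 2)))" if h: "\<not> y0*(ln y0 - 1) < \<epsilon>"
  proof -
    have "\<exists>x. 1 \<le> x \<and> x \<le> y0 \<and> x*(ln x - 1) = \<epsilon>"
      by (rule IVT[of "\<lambda>x. x*(ln x - 1)"]) (use eps h y0 in \<open>auto intro!: continuous_intros\<close>)
    then obtain ys where ys: "1 \<le> ys" "ys \<le> y0" "ys*(ln ys - 1) = \<epsilon>" by blast
    have ys1: "ys > 1" using ys eps by (cases "ys = 1") auto
    define Ps where "Ps = (ys - 1) * \<sigma>0sq / c"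
    have YPs: "Y Ps = ys" using c assms(4) by (simp add: Ps_def Y_def)
    have Ps: "0 < Ps" "Ps \<le> Pmax" using YPs Y0 ys ys1 Ymono[of Ps Pmax] Ymono[of 0 Ps]
      by (auto simp: Y_def)
    have lt: "d2d_energy F W r \<alpha> \<sigma>0sq \<eta> Pc Ps < d2d_energy F W r \<alpha> \<sigma>0sq \<eta> Pc Q"
      if "0 < Q" "Y Q \<noteq> ys" for Q
    proof -
      have "g (Y Q) > g ys"
      proof (cases "Y Q < ys")
        case True then show ?thesis unfolding g_def
          using g_cmp[of "Y Q" ys \<epsilon>] Ypos[OF that(1)] ys by simp
      next
        case False then show ?thesis unfolding g_def
          using g_cmp2[of ys "Y Q" \<epsilon>] ys1 that ys by simp
      qed
      then show ?thesis using C YPs by (simp add: E)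
    qed
    have opt: "d2d_optimal F W r \<alpha> \<sigma>0sq \<eta> Pc Pmax Ps"
      unfolding d2d_optimal_def
    proof (intro conjI Ps allI impI)
      fix Q assume q: "0 < Q \<and> Q \<le> Pmax"
      show "d2d_energy F W r \<alpha> \<sigma>0sq \<eta> Pc Ps \<le> d2d_energy F W r \<alpha> \<sigma>0sq \<eta> Pc Q"
      proof (cases "Y Q = ys")
        case True then have "Q = Ps" using YPs Yinj by metis
        then show ?thesis by simp
      next
        case False then show ?thesis using lt[of Q] q by simp
      qed
    qed
    show ?thesis
    proof (intro conjI exI[of _ Ps] opt allI impI)
      fix Pt assume o: "d2d_optimal F W r \<alpha> \<sigma>0sq \<eta> Pc Pmax Pt"
      have "Y Pt = ys"
      proof (rule ccontr)
        assume "Y Pt \<noteq> ys"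
        then show False using lt[of Pt] o Ps unfolding d2d_optimal_def by force
      qed
      then show "let y = 1 + Pt * r powr (-\<alpha>) / \<sigma>0sq in (y / exp 1) powr y = 2 powr (\<epsilon> / ln 2)"
        using cond_eq(1)[of ys] cond_eq(2)[of ys \<epsilon>] ys1 ys by (simp add: Y_def c_def)
    qed
  qed
  show ?thesis using A B cond by blast
qed

end
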